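(* Let $\mathcal H$ be a real Hilbert space and $p\ge 2$. Let $J:\mathcal H\to\mathbb R\cup\{\infty\}$ be convex, lower semicontinuous, proper, with dense effective domain, and absolutely $p$-homogeneous ($J(cu)=|c|^pJ(u)$ for all $c\neq0$, $u\in\mathcal H$, and $J(0)=0$), and assume $\lambda_1:=\inf_{u\in\mathcal H_0}\frac{pJ(u)}{\|u\|^p}>0$. Let $f\in\mathcal H_0$ and let $u$ be the solution of the gradient flow $\partial_t u+\partial J(u)\ni 0$, $u(0)=f$. Then the extinction time satisfies $T_{\mathrm{ex}}=\infty$.
   Context: $\langle\cdot,\cdot\rangle$ and $\|\cdot\|$ denote the inner product and norm of $\mathcal H$. The subdifferential is $\partial J(u)=\{\zeta\in\mathcal H: J(u)+\langle\zeta,v-u\rangle\le J(v)\ \forall v\in\mathcal H\}$. $\mathcal N(J)=\{u\in\mathcal H:J(u)=0\}$ is the null-space of $J$ (a closed linear subspace) and $\mathcal H_0:=\mathcal N(J)^\perp\setminus\{0\}$. The gradient flow is understood in Brezis' sense: the unique continuous $u:[0,\infty)\to\mathcal H$, Lipschitz on $[\delta,\infty)$ for every $\delta>0$, right-differentiable on $(0,\infty)$ with $u(0)=f$ and right derivative $\partial_t^+u(t)=-\zeta(t)$, where $\zeta(t)$ is the element of minimal norm of the closed convex set $\partial J(u(t))$. The extinction time is $T_{\mathrm{ex}}:=\inf\{T>0: u(t)=0\ \forall t\ge T\}\in(0,\infty]$. *)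

theory Defs
  imports "HOL-Analysis.Analysis" "HOL-Library.Extended_Real"
begin

text \<open>Functionals J : H -> R \<union> {\<infinity>} are modelled as maps into ereal that never take the value -\<infinity>.\<close>

definition convex_ereal :: "('a::real_vector \<Rightarrow> ereal) \<Rightarrow> bool" where
  "convex_ereal J \<longleftrightarrow>
     (\<forall>x y. \<forall>t::real. 0 \<le> t \<and> t \<le> 1 \<longrightarrow>
        J ((1 - t) *\<^sub>R x + t *\<^sub>R y) \<le> ereal (1 - t) * J x + ereal t * J y)"

definition lsc_ereal :: "('a::topological_space \<Rightarrow> ereal) \<Rightarrow> bool" where
  "lsc_ereal J \<longleftrightarrow> (\<forall>c::real. closed {u. J u \<le> ereal c})"

definition proper_ereal :: "('a \<Rightarrow> ereal) \<Rightarrow> bool" where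
  "proper_ereal J \<longleftrightarrow> (\<forall>u. J u \<noteq> -\<infinity>) \<and> (\<exists>u. J u \<noteq> \<infinity>)"

definition eff_dom :: "('a \<Rightarrow> ereal) \<Rightarrow> 'a set" where
  "eff_dom J = {u. J u < \<infinity>}"

definition abs_p_homogeneous :: "real \<Rightarrow> ('a::real_vector \<Rightarrow> ereal) \<Rightarrow> bool" where
  "abs_p_homogeneous p J \<longleftrightarrow>
     (\<forall>c u. c \<noteq> 0 \<longrightarrow> J (c *\<^sub>R u) = ereal (\<bar>c\<bar> powr p) * J u) \<and> J 0 = 0"

definition null_space :: "('a \<Rightarrow> ereal) \<Rightarrow> 'a set" where
  "null_space J = {u. J u = 0}"

definition H0 :: "('a::real_inner \<Rightarrow> ereal) \<Rightarrow> 'a set" where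
  "H0 J = orthogonal_comp (null_space J) - {0}"

definition lambda1 :: "real \<Rightarrow> ('a::real_inner \<Rightarrow> ereal) \<Rightarrow> ereal" where
  "lambda1 p J = (INF u\<in>H0 J. ereal p * J u / ereal (norm u powr p))"

definition subdiff :: "('a::real_inner \<Rightarrow> ereal) \<Rightarrow> 'a \<Rightarrow> 'a set" where
  "subdiff J u = {\<zeta>. \<forall>v. J u + ereal (inner \<zeta> (v - u)) \<le> J v}"

definition min_norm_elem :: "'a::real_normed_vector set \<Rightarrow> 'a \<Rightarrow> bool" where
  "min_norm_elem S z \<longleftrightarrow> z \<in> S \<and> (\<forall>w\<in>S. norm z \<le> norm w)"

text \<open>Solution of the gradient flow in Brezis' sense.\<close>
definition is_gradient_flow :: "('a::real_inner \<Rightarrow> ereal) \<Rightarrow> 'a \<Rightarrow> (real \<Rightarrow> 'a) \<Rightarrow> bool" where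
  "is_gradient_flow J f u \<longleftrightarrow>
     continuous_on {0..} u \<and>
     (\<forall>\<delta>>0. \<exists>L. L-lipschitz_on {\<delta>..} u) \<and>
     u 0 = f \<and>
     (\<forall>t>0. \<exists>\<zeta>. min_norm_elem (subdiff J (u t)) \<zeta> \<and>
                 (u has_vector_derivative (- \<zeta>)) (at t within {t..}))"

definition extinction_time :: "(real \<Rightarrow> 'a::zero) \<Rightarrow> ereal" where
  "extinction_time u = Inf {ereal T | T. T > 0 \<and> (\<forall>t\<ge>T. u t = 0)}"

end

theory Submission
  imports Defs
begin

lemma dini_mono:
  fixes \<phi> :: "real \<Rightarrow> real" and a b :: real
  assumes ab: "a \<le> b"
    and lsc: "\<And>t \<epsilon>. a < t \<Longrightarrow> t \<le> b \<Longrightarrow> \<epsilon> > 0 \<Longrightarrow> \<exists>d>0. \<forall>s. t - d < s \<and> s < t \<longrightarrow> \<phi> t \<le> \<phi> s + \<epsilon>"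
    and dini: "\<And>t \<eta>. a \<le> t \<Longrightarrow> t < b \<Longrightarrow> \<eta> > 0 \<Longrightarrow> \<exists>d>0. \<forall>s. t < s \<and> s < t + d \<longrightarrow> \<phi> s \<le> \<phi> t + \<eta> * (s - t)"
  shows "\<phi> b \<le> \<phi> a"
proof -
  have main: "\<phi> b \<le> \<phi> a + \<eta> * (b - a)" if \<eta>: "\<eta> > 0" for \<eta>
  proof -
    define G where "G = {r. a \<le> r \<and> r \<le> b \<and> (\<forall>q. a \<le> q \<and> q \<le> r \<longrightarrow> \<phi> q \<le> \<phi> a + \<eta> * (q - a))}"
    define c where "c = Sup G"
    have aG: "a \<in> G" using ab by (auto simp: G_def)
    have bdd: "bdd_above G" by (auto simp: G_def bdd_above_def)
    have ac: "a \<le> c" using aG bdd c_def by (simp add: cSup_upper)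
    have cb: "c \<le> b" unfolding c_def using aG by (intro cSup_least) (auto simp: G_def)
    have below: "\<phi> q \<le> \<phi> a + \<eta> * (q - a)" if "a \<le> q" "q < c" for q
    proof -
      obtain r where "r \<in> G" "q < r" using \<open>q < c\<close> aG unfolding c_def
        by (metis empty_iff less_cSupE)
      then show ?thesis using that by (auto simp: G_def)
    qed
    have atc: "\<phi> c \<le> \<phi> a + \<eta> * (c - a)"
    proof (cases "a = c")
      case True then show ?thesis by simp
    next
      case False
      then have "a < c" using ac by simp
      show ?thesis
      proof (rule field_le_epsilon)
        fix e :: real assume "e > 0"
        obtain d where d: "d > 0" "\<forall>s. c - d < s \<and> s < c \<longrightarrow> \<phi> c \<le> \<phi> s + e"
          using lsc[OF \<open>a < c\<close> cb \<open>e > 0\<close>] by blast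
        define s where "s = max a (c - d/2)"
        have "a \<le> s" "s < c" "c - d < s" using \<open>a < c\<close> d by (auto simp: s_def)
        then have "\<phi> c \<le> \<phi> s + e" "\<phi> s \<le> \<phi> a + \<eta> * (s - a)" using d below by auto
        moreover have "\<eta> * (s - a) \<le> \<eta> * (c - a)" using \<eta> \<open>s < c\<close> by simp
        ultimately show "\<phi> c \<le> \<phi> a + \<eta> * (c - a) + e" by linarith
      qed
    qed
    have cG: "c \<in> G"
      using ac cb atc below unfolding G_def by (auto simp: order_le_less)
    have "c = b"
    proof (rule ccontr)
      assume "c \<noteq> b"
      then have "c < b" using cb by simp
      obtain d where d: "d > 0" "\<forall>s. c < s \<and> s < c + d \<longrightarrow> \<phi> s \<le> \<phi> c + \<eta> * (s - c)"
        using dini[OF ac \<open>c < b\<close> \<eta>] by blast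
      define r where "r = min b (c + d/2)"
      have r: "c < r" "r \<le> b" "r < c + d" using \<open>c < b\<close> d by (auto simp: r_def)
      have "r \<in> G"
        unfolding G_def
      proof (intro CollectI conjI allI impI)
        fix q assume q: "a \<le> q \<and> q \<le> r"
        show "\<phi> q \<le> \<phi> a + \<eta> * (q - a)"
        proof (cases "q \<le> c")
          case True then show ?thesis using cG q by (auto simp: G_def)
        next
          case False
          then have "\<phi> q \<le> \<phi> c + \<eta> * (q - c)" using d r q by auto
          then show ?thesis using atc by (simp add: algebra_simps)
        qed
      qed (use ac r in auto)
      then have "r \<le> c" unfolding c_def using bdd by (simp add: cSup_upper)
      then show False using r by simp
    qed
    then show ?thesis using atc by simp
  qed
  show ?thesis
  proof (rule field_le_epsilon)
    fix e :: real assume "e > 0"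
    show "\<phi> b \<le> \<phi> a + e"
    proof (cases "a = b")
      case True then show ?thesis using \<open>e>0\<close> by simp
    next
      case False
      then have "b - a > 0" using ab by simp
      have "\<phi> b \<le> \<phi> a + (e / (b - a)) * (b - a)"
        using main[of "e / (b - a)"] \<open>e > 0\<close> \<open>b - a > 0\<close> by simp
      then show ?thesis using \<open>b - a > 0\<close> by simp
    qed
  qed
qed

lemma vd_approx:
  fixes u :: "real \<Rightarrow> 'a::real_normed_vector"
  assumes "(u has_vector_derivative v) (at t within {t..})" "\<eta> > 0"
  shows "\<exists>d>0. \<forall>s. t < s \<and> s < t + d \<longrightarrow> norm (u s - u t - (s - t) *\<^sub>R v) \<le> \<eta> * (s - t)"
proof -
  from assms(1) have "(u has_derivative (\<lambda>h. h *\<^sub>R v)) (at t within {t..})"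
    by (simp add: has_vector_derivative_def)
  then obtain d where d: "d > 0" "\<forall>y\<in>{t..}. norm (y - t) < d \<longrightarrow> norm (u y - u t - (y - t) *\<^sub>R v) \<le> \<eta> * norm (y - t)"
    using assms(2) unfolding has_derivative_within_alt by blast
  show ?thesis
    by (rule exI[of _ d]) (use d in auto)
qed


lemma lin_aux: "4 * a \<le> b \<Longrightarrow> (c::real) + b = 2*e + 2*f \<Longrightarrow> g \<le> h \<Longrightarrow> dm \<le> Q \<Longrightarrow> e \<le> a + h \<Longrightarrow> f \<le> dm + g \<Longrightarrow> c \<le> 2*(Q-a) + 4*h"
  by (smt (verit))

lemma lin_aux2: "(k::real) < E / 8 \<Longrightarrow> a < E / 4 \<Longrightarrow> x \<le> 2 * a + 4 * k \<Longrightarrow> x < E"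
  by linarith

lemma hilbert_cluster:
  fixes z :: "nat \<Rightarrow> 'a::{real_inner,complete_space}"
  assumes L: "\<And>n. norm (z n) \<le> L"
  shows "\<exists>x. \<forall>C. closed C \<and> convex C \<and> (\<exists>n. \<forall>m\<ge>n. z m \<in> C) \<longrightarrow> x \<in> C"
proof -
  define A where "A n = convex hull (z ` {n..})" for n
  define d where "d n = Inf (norm ` A n)" for n
  have zA: "z n \<in> A n" for n unfolding A_def by (auto intro: hull_inc)
  have Ane: "norm ` A n \<noteq> {}" for n using zA by auto
  have Abdd: "bdd_below (norm ` A n)" for n by (auto intro: bdd_belowI[of _ 0])
  have Amono: "A m \<subseteq> A n" if "n \<le> m" for n m
    unfolding A_def using that by (intro hull_mono) auto
  have Aconv: "convex (A n)" for n unfolding A_def by simp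
  have d0: "0 \<le> d n" for n unfolding d_def using Ane by (intro cInf_greatest) auto
  have dle: "d n \<le> norm w" if "w \<in> A n" for n w
    unfolding d_def using that Abdd by (intro cInf_lower) auto
  have dL: "d n \<le> L" for n using dle[OF zA] L order_trans by blast
  have dmono: "d n \<le> d m" if "n \<le> m" for n m
    unfolding d_def using Ane Abdd Amono[OF that] by (intro cInf_superset_mono) auto
  have "\<exists>w\<in>A n. norm w < d n + 1 / (Suc n)" for n
  proof -
    have "Inf (norm ` A n) < d n + 1 / Suc n" unfolding d_def by simp
    then obtain r where "r \<in> norm ` A n" "r < d n + 1 / Suc n"
      using Ane by (meson cInf_lessD)
    then show ?thesis by auto
  qed
  then obtain y where yA: "\<And>n. y n \<in> A n" and ylt: "\<And>n. norm (y n) < d n + 1 / Suc n"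
    by metis
  define K where "K = 2 * L + 1"
  have L0: "0 \<le> L" using L[of 0] norm_ge_zero order_trans by blast
  have ysq: "(norm (y n))^2 \<le> (d n)^2 + K / Suc n" for n
  proof -
    have e: "0 < 1 / real (Suc n)" "1 / real (Suc n) \<le> 1" by auto
    have "(norm (y n))^2 \<le> (d n + 1 / Suc n)^2"
      using ylt[of n] by (intro power_mono) auto
    also have "\<dots> = (d n)^2 + (2 * d n + 1 / Suc n) * (1 / Suc n)"
      by (simp add: power2_eq_square algebra_simps)
    also have "\<dots> \<le> (d n)^2 + K * (1 / Suc n)"
    proof (intro add_left_mono mult_right_mono)
      show "2 * d n + 1 / real (Suc n) \<le> K" using dL[of n] e unfolding K_def by linarith
    qed simp
    finally show ?thesis by simp
  qed
  define q where "q n = (d n)^2" for n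
  have qinc: "incseq q" unfolding q_def incseq_def using dmono d0 by (auto intro: power_mono)
  have qB: "q n \<le> L^2" for n unfolding q_def using dL d0 by (auto intro: power_mono)
  obtain Q where qQ: "q \<longlonglongrightarrow> Q" and qleQ: "\<And>n. q n \<le> Q"
    using incseq_convergent[OF qinc, of "L^2"] qB by blast
  have mid: "(norm (y n - y m))^2 \<le> 2 * (Q - q n) + 4 * (K / Suc n)" if "n \<le> m" for n m
  proof -
    have "(1/2) *\<^sub>R y n + (1/2) *\<^sub>R y m \<in> A n"
      using Aconv[of n] yA[of n] Amono[OF that] yA[of m] unfolding convex_def
      by (simp add: subset_eq)
    then have "d n \<le> norm ((1/2) *\<^sub>R y n + (1/2) *\<^sub>R y m)" by (rule dle)
    also have "norm ((1/2) *\<^sub>R y n + (1/2) *\<^sub>R y m) = norm (y n + y m) / 2"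
      by (simp add: scaleR_add_right[symmetric])
    finally have h: "2 * d n \<le> norm (y n + y m)" by simp
    have "(2 * d n)^2 \<le> (norm (y n + y m))^2"
      using h d0[of n] by (intro power_mono) auto
    then have "4 * q n \<le> (norm (y n + y m))^2"
      unfolding q_def by (simp add: power_mult_distrib)
    moreover have "(norm (y n - y m))^2 + (norm (y n + y m))^2 = 2 * (norm (y n))^2 + 2 * (norm (y m))^2"
      by (simp add: power2_norm_eq_inner inner_diff_left inner_diff_right inner_add_left inner_add_right inner_commute)
    moreover have "K / Suc m \<le> K / Suc n" using that L0 unfolding K_def
      by (intro divide_left_mono) auto
    moreover have "q m \<le> Q" by (rule qleQ)
    ultimately show ?thesis using ysq[of n] ysq[of m] unfolding q_def by (rule lin_aux)
  qed
  have K0: "K > 0" unfolding K_def using L0 by simp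
  have "Cauchy y"
  proof (rule CauchyI)
    fix e :: real assume e: "e > 0"
    have "eventually (\<lambda>n. Q - q n < e^2 / 4) sequentially"
    proof -
      have "eventually (\<lambda>n. dist (q n) Q < e^2 / 4) sequentially"
        using tendstoD[OF qQ, of "e^2/4"] e by simp
      then show ?thesis by eventually_elim (simp add: dist_real_def abs_if split: if_splits)
    qed
    then obtain N1 where N1: "\<And>n. n \<ge> N1 \<Longrightarrow> Q - q n < e^2 / 4" by (auto simp: eventually_sequentially)
    obtain N2 where N2: "8 * K / e^2 < real N2" using reals_Archimedean2 by blast
    define M where "M = max N1 N2"
    have key: "norm (y n - y m) < e" if "M \<le> n" "n \<le> m" for n m
    proof -
      have "K / Suc n < e^2 / 8"
      proof -
        have "8 * K / e^2 < Suc n" using N2 that unfolding M_def by linarith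
        then have "8 * K < e^2 * Suc n" using e by (simp add: divide_less_eq mult.commute)
        then show ?thesis using e by (simp add: field_simps)
      qed
      moreover have "Q - q n < e^2 / 4" using N1[of n] that unfolding M_def by simp
      ultimately have "(norm (y n - y m))^2 < e^2"
        using mid[OF that(2)] by (rule lin_aux2)
      then show ?thesis using e by (simp add: power_less_imp_less_base)
    qed
    show "\<exists>M. \<forall>m\<ge>M. \<forall>n\<ge>M. norm (y m - y n) < e"
    proof (intro exI allI impI)
      fix m n assume "M \<le> m" "M \<le> n"
      show "norm (y m - y n) < e"
      proof (cases "m \<le> n")
        case True then show ?thesis using key \<open>M \<le> m\<close> by blast
      next
        case False then show ?thesis using key[of n m] \<open>M \<le> n\<close> by (simp add: norm_minus_commute)
      qed
    qed
  qed
  then obtain x where yx: "y \<longlonglongrightarrow> x" using Cauchy_convergent_iff convergent_def by blast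
  show ?thesis
  proof (intro exI allI impI)
    fix C :: "'a set" assume C: "closed C \<and> convex C \<and> (\<exists>n. \<forall>m\<ge>n. z m \<in> C)"
    then obtain n where n: "\<And>m. m \<ge> n \<Longrightarrow> z m \<in> C" by blast
    have "A n \<subseteq> C" unfolding A_def using C n by (intro hull_minimal) auto
    then have "eventually (\<lambda>m. y m \<in> C) sequentially"
      unfolding eventually_sequentially using Amono yA by blast
    then show "x \<in> C" using C yx by (intro Lim_in_closed_set) auto
  qed
qed


lemma J_homog_pos:
  assumes "abs_p_homogeneous p J" "c > 0"
  shows "J (c *\<^sub>R u) = ereal (c powr p) * J u"
  using assms unfolding abs_p_homogeneous_def by auto

lemma J_nonneg:
  assumes "convex_ereal J" "abs_p_homogeneous p J"
  shows "0 \<le> J u"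
proof -
  have "J ((1 - 1/2) *\<^sub>R u + (1/2) *\<^sub>R (-u)) \<le> ereal (1 - 1/2) * J u + ereal (1/2) * J (-u)"
    using assms(1) unfolding convex_ereal_def by (metis divide_nonneg_nonneg field_sum_of_halves le_add_same_cancel1 zero_le_numeral zero_le_one)
  moreover have "J (-u) = J u"
    using assms(2) unfolding abs_p_homogeneous_def
    by (metis abs_minus_cancel abs_one ereal_mult_left_mono mult_1 one_ereal_def powr_one_eq_one scaleR_minus1_left neg_equal_0_iff_equal zero_neq_one)
  moreover have "J 0 = 0" using assms(2) unfolding abs_p_homogeneous_def by auto
  ultimately have h: "0 \<le> ereal (1/2) * J u + ereal (1/2) * J u" by simp
  show ?thesis
  proof (cases "J u")
    case (real r) then show ?thesis using h by simp
  next
    case PInf then show ?thesis by simp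
  next
    case MInf then show ?thesis using h by simp
  qed
qed

lemma subdiff_finite:
  assumes "proper_ereal J" "z \<in> subdiff J x"
  shows "\<exists>e. J x = ereal e"
proof -
  obtain v where v: "J v \<noteq> \<infinity>" using assms(1) unfolding proper_ereal_def by auto
  have "J x + ereal (inner z (v - x)) \<le> J v" using assms(2) unfolding subdiff_def by auto
  moreover have "J x \<noteq> -\<infinity>" using assms(1) unfolding proper_ereal_def by auto
  ultimately show ?thesis using v by (cases "J x") auto
qed

lemma euler:
  assumes hom: "abs_p_homogeneous p J" and Je: "J x = ereal e" and z: "z \<in> subdiff J x"
  shows "inner z x = p * e"
proof -
  define h where "h c = c powr p * e - e - (c - 1) * inner z x" for c :: real
  have hpos: "0 \<le> h c" if "c > 0" for c
  proof -
    have "J x + ereal (inner z (c *\<^sub>R x - x)) \<le> J (c *\<^sub>R x)" using z unfolding subdiff_def by auto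
    also have "J (c *\<^sub>R x) = ereal (c powr p * e)" using J_homog_pos[OF hom that] Je by simp
    finally have "e + inner z (c *\<^sub>R x - x) \<le> c powr p * e" using Je by simp
    then show ?thesis unfolding h_def by (simp add: inner_diff_right algebra_simps)
  qed
  have h1: "h 1 = 0" unfolding h_def by simp
  have "(h has_real_derivative (p * 1 powr (p - 1) * e - inner z x)) (at 1)"
    unfolding h_def
    by (rule derivative_eq_intros has_real_derivative_powr | simp)+
  then have "(h has_real_derivative (p * e - inner z x)) (at 1)" by simp
  moreover have "\<forall>y. \<bar>1 - y\<bar> < 1 \<longrightarrow> h 1 \<le> h y" using hpos h1 by auto
  ultimately have "p * e - inner z x = 0" using DERIV_local_min[where f=h and x=1 and l="p * e - inner z x" and d=1] by simp
  then show ?thesis by simp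
qed

lemma subdiff_convex2:
  assumes Je: "J x = ereal e" and z1: "z1 \<in> subdiff J x" and z2: "z2 \<in> subdiff J x"
    and l: "0 \<le> l" "l \<le> 1"
  shows "(1 - l) *\<^sub>R z1 + l *\<^sub>R z2 \<in> subdiff J x"
  unfolding subdiff_def
proof (intro CollectI allI)
  fix v
  have a: "ereal e + ereal (inner z1 (v - x)) \<le> J v" using z1 Je unfolding subdiff_def by auto
  have b: "ereal e + ereal (inner z2 (v - x)) \<le> J v" using z2 Je unfolding subdiff_def by auto
  show "J x + ereal (inner ((1 - l) *\<^sub>R z1 + l *\<^sub>R z2) (v - x)) \<le> J v"
  proof (cases "J v")
    case (real r)
    then have "e + inner z1 (v - x) \<le> r" "e + inner z2 (v - x) \<le> r" using a b by auto
    then have "(1 - l) * (e + inner z1 (v - x)) + l * (e + inner z2 (v - x)) \<le> (1 - l) * r + l * r"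
      using l by (intro add_mono mult_left_mono) auto
    then show ?thesis using real Je by (simp add: inner_add_left algebra_simps)
  next
    case PInf then show ?thesis by simp
  next
    case MInf then show ?thesis using a by simp
  qed
qed

lemma min_norm_var:
  assumes Je: "J x = ereal e" and mn: "min_norm_elem (subdiff J x) z" and w: "w \<in> subdiff J x"
  shows "(norm z)^2 \<le> inner z w"
proof -
  have zS: "z \<in> subdiff J x" and zmin: "\<And>w. w \<in> subdiff J x \<Longrightarrow> norm z \<le> norm w"
    using mn unfolding min_norm_elem_def by auto
  define a where "a = inner z (w - z)"
  define b where "b = (norm (w - z))^2"
  have key: "0 \<le> 2 * a + l * b" if l: "0 < l" "l \<le> 1" for l
  proof -
    have "(1 - l) *\<^sub>R z + l *\<^sub>R w \<in> subdiff J x"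
      using subdiff_convex2[OF Je zS w] l by auto
    moreover have "(1 - l) *\<^sub>R z + l *\<^sub>R w = z + l *\<^sub>R (w - z)" by (simp add: algebra_simps)
    ultimately have "norm z \<le> norm (z + l *\<^sub>R (w - z))" using zmin by metis
    then have "(norm z)^2 \<le> (norm (z + l *\<^sub>R (w - z)))^2" by (simp add: power_mono)
    also have "\<dots> = (norm z)^2 + l * (2 * a + l * b)"
      unfolding a_def b_def power2_norm_eq_inner
      by (simp add: inner_add_left inner_add_right inner_commute algebra_simps power2_eq_square)
    finally have "0 \<le> l * (2 * a + l * b)" by simp
    then show ?thesis using l by (simp add: zero_le_mult_iff)
  qed
  have "0 \<le> a"
  proof (rule ccontr)
    assume "\<not> 0 \<le> a"
    then have an: "a < 0" by simp
    have b0: "0 \<le> b" unfolding b_def by simp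
    define l where "l = min 1 (- a / (b + 1))"
    have "0 < - a / (b + 1)" using an b0 by (intro divide_pos_pos) auto
    then have l: "0 < l" "l \<le> 1" by (auto simp: l_def)
    have "l * b \<le> (- a / (b + 1)) * b" using b0 unfolding l_def by (intro mult_right_mono) auto
    also have "\<dots> \<le> - a" using an b0 by (simp add: field_simps)
    finally have "2 * a + l * b < 0" using an by linarith
    then show False using key[OF l] by simp
  qed
  then show ?thesis unfolding a_def by (simp add: inner_diff_right power2_norm_eq_inner)
qed

lemma lsc_point:
  assumes lsc: "lsc_ereal J" and Je: "J x = ereal e" and eps: "\<epsilon> > 0"
  shows "\<exists>d>0. \<forall>v. dist v x < d \<longrightarrow> ereal (e - \<epsilon>) < J v"
proof -
  have "closed {u. J u \<le> ereal (e - \<epsilon>)}" using lsc unfolding lsc_ereal_def by blast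
  then have "open (- {u. J u \<le> ereal (e - \<epsilon>)})" by auto
  moreover have "x \<in> - {u. J u \<le> ereal (e - \<epsilon>)}" using Je eps by auto
  ultimately obtain d where "d > 0" "ball x d \<subseteq> - {u. J u \<le> ereal (e - \<epsilon>)}"
    using open_contains_ball by blast
  then show ?thesis by (intro exI[of _ d]) (auto simp: dist_commute subset_eq not_le)
qed


lemma real_approx:
  fixes \<phi> :: "real \<Rightarrow> real"
  assumes "(\<phi> has_real_derivative D) (at t within {t..})" "\<eta> > 0"
  shows "\<exists>d>0. \<forall>s. t < s \<and> s < t + d \<longrightarrow> \<bar>\<phi> s - \<phi> t - (s - t) * D\<bar> \<le> \<eta> * (s - t)"
  using vd_approx[of \<phi> D t \<eta>] assms by (simp add: has_real_derivative_iff_has_vector_derivative)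

lemma real_dini_le:
  fixes \<phi> :: "real \<Rightarrow> real"
  assumes "(\<phi> has_real_derivative D) (at t within {t..})" "D \<le> 0" "\<eta> > 0"
  shows "\<exists>d>0. \<forall>s. t < s \<and> s < t + d \<longrightarrow> \<phi> s \<le> \<phi> t + \<eta> * (s - t)"
proof -
  obtain d where d: "d > 0" "\<forall>s. t < s \<and> s < t + d \<longrightarrow> \<bar>\<phi> s - \<phi> t - (s - t) * D\<bar> \<le> \<eta> * (s - t)"
    using real_approx[OF assms(1,3)] by blast
  show ?thesis
  proof (intro exI[of _ d] conjI allI impI)
    fix s assume s: "t < s \<and> s < t + d"
    then have "(s - t) * D \<le> 0" using assms(2) by (simp add: mult_nonneg_nonpos)
    then show "\<phi> s \<le> \<phi> t + \<eta> * (s - t)" using d s by (auto simp: abs_le_iff)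
  qed (use d in auto)
qed

lemma cont_lsc:
  fixes \<phi> :: "real \<Rightarrow> real"
  assumes "isCont \<phi> t" "\<epsilon> > 0"
  shows "\<exists>d>0. \<forall>s. t - d < s \<and> s < t \<longrightarrow> \<phi> t \<le> \<phi> s + \<epsilon>"
proof -
  have "eventually (\<lambda>s. dist (\<phi> s) (\<phi> t) < \<epsilon>) (at t)"
    using assms unfolding isCont_def by (rule tendstoD)
  then obtain d where d: "d > 0" "\<And>s. s \<noteq> t \<Longrightarrow> dist s t < d \<Longrightarrow> dist (\<phi> s) (\<phi> t) < \<epsilon>"
    unfolding eventually_at by auto
  show ?thesis
    by (intro exI[of _ d] conjI allI impI; use d in \<open>force simp: dist_real_def abs_less_iff\<close>)
qed

lemma quot_step:
  fixes Pt Ps Es Et h B :: real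
  assumes "Pt > 0" "Ps \<ge> Pt / 2" "Es * Pt - Et * Ps \<le> h * B" "B \<ge> 0" "h \<ge> 0"
  shows "Es / Ps - Et / Pt \<le> h * (2 * B / Pt^2)"
proof -
  have Ps: "Ps > 0" using assms by simp
  have "Es / Ps - Et / Pt = (Es * Pt - Et * Ps) / (Ps * Pt)" using Ps assms(1) by (simp add: field_simps)
  also have "\<dots> \<le> h * B / (Ps * Pt)" using assms(3) Ps assms(1) by (intro divide_right_mono) auto
  also have "\<dots> \<le> h * B / (Pt^2 / 2)"
  proof (rule divide_left_mono)
    show "0 \<le> h * B" using assms by simp
    show "Pt^2 / 2 \<le> Ps * Pt" using assms(1,2) by (simp add: power2_eq_square mult_right_mono)
    show "0 < Ps * Pt * (Pt^2 / 2)" using Ps assms(1) by simp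
  qed
  also have "\<dots> = h * (2 * B / Pt^2)" by simp
  finally show ?thesis .
qed

lemma lsc_arith:
  fixes Et Es ws wt e1 e2 :: real
  assumes "Et \<ge> 0" "ws > 0" "Es > Et - e1" "\<bar>ws - wt\<bar> < e2" "e1 > 0"
  shows "Et * wt \<le> Es * ws + (Et * e2 + e1 * (wt + e2))"
proof -
  have a: "(Et - e1) * ws \<le> Es * ws" using assms by (intro mult_right_mono) auto
  have b: "Et * (wt - e2) \<le> Et * ws" using assms by (intro mult_left_mono) auto
  have c: "e1 * ws \<le> e1 * (wt + e2)" using assms by (intro mult_left_mono) auto
  show ?thesis using a b c by (simp add: algebra_simps)
qed

locale gflow =
  fixes J :: "'a::{real_inner,complete_space} \<Rightarrow> ereal" and p :: real and u :: "real \<Rightarrow> 'a"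
  assumes p2: "p \<ge> 2" and cvx: "convex_ereal J" and lsc: "lsc_ereal J"
    and prp: "proper_ereal J" and hom: "abs_p_homogeneous p J"
    and flow: "\<forall>t>0. \<exists>\<zeta>. min_norm_elem (subdiff J (u t)) \<zeta> \<and> (u has_vector_derivative (- \<zeta>)) (at t within {t..})"
    and lip: "\<forall>\<delta>>0. \<exists>L. L-lipschitz_on {\<delta>..} u"
begin

definition "zeta t = (SOME z. min_norm_elem (subdiff J (u t)) z \<and> (u has_vector_derivative (- z)) (at t within {t..}))"

lemma zeta: assumes "t > 0"
  shows "min_norm_elem (subdiff J (u t)) (zeta t)" "(u has_vector_derivative (- zeta t)) (at t within {t..})"
proof -
  have "\<exists>z. min_norm_elem (subdiff J (u t)) z \<and> (u has_vector_derivative (- z)) (at t within {t..})"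
    using flow assms by blast
  from someI_ex[OF this] show "min_norm_elem (subdiff J (u t)) (zeta t)" "(u has_vector_derivative (- zeta t)) (at t within {t..})"
    unfolding zeta_def by auto
qed

lemma zeta_sub: "t > 0 \<Longrightarrow> zeta t \<in> subdiff J (u t)"
  using zeta(1) unfolding min_norm_elem_def by auto

definition "E t = real_of_ereal (J (u t))"

lemma JE: "t > 0 \<Longrightarrow> J (u t) = ereal (E t)"
  using subdiff_finite[OF prp zeta_sub] unfolding E_def by force

lemma E_nonneg: "0 \<le> E t"
  using J_nonneg[OF cvx hom, of "u t"] unfolding E_def by (simp add: real_of_ereal_pos)

lemma euler_flow: "t > 0 \<Longrightarrow> inner (zeta t) (u t) = p * E t"
  using euler[OF hom JE zeta_sub] by blast

lemma lipI: assumes "\<delta> > 0" obtains L where "0 \<le> L" "\<And>s t. s \<ge> \<delta> \<Longrightarrow> t \<ge> \<delta> \<Longrightarrow> norm (u s - u t) \<le> L * \<bar>s - t\<bar>"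
proof -
  obtain L where "L-lipschitz_on {\<delta>..} u" using lip assms by blast
  then show ?thesis using that unfolding lipschitz_on_def by (auto simp: dist_norm)
qed

lemma zeta_bound:
  assumes "0 \<le> L" "\<And>s t. s \<ge> \<delta> \<Longrightarrow> t \<ge> \<delta> \<Longrightarrow> norm (u s - u t) \<le> L * \<bar>s - t\<bar>" "\<delta> > 0" "t \<ge> \<delta>"
  shows "norm (zeta t) \<le> L"
proof (rule field_le_epsilon)
  fix e :: real assume e: "e > 0"
  have t0: "t > 0" using assms by simp
  obtain d where d: "d > 0" "\<forall>s. t < s \<and> s < t + d \<longrightarrow> norm (u s - u t - (s - t) *\<^sub>R (- zeta t)) \<le> e * (s - t)"
    using vd_approx[OF zeta(2)[OF t0] e] by blast
  define s where "s = t + d/2"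
  have s: "t < s" "s < t + d" using d by (auto simp: s_def)
  have a: "norm (u s - u t - (s - t) *\<^sub>R (- zeta t)) \<le> e * (s - t)" using d s by auto
  have b: "norm (u s - u t) \<le> L * (s - t)" using assms(2)[of s t] s assms(4) by auto
  have "(s - t) * norm (zeta t) = norm ((s - t) *\<^sub>R (- zeta t))" using s by simp
  also have "\<dots> \<le> norm (u s - u t - (s - t) *\<^sub>R (- zeta t)) + norm (u s - u t)"
  proof -
    have "(s - t) *\<^sub>R (- zeta t) = (u s - u t) - (u s - u t - (s - t) *\<^sub>R (- zeta t))" by simp
    then have "norm ((s - t) *\<^sub>R (- zeta t)) \<le> norm (u s - u t) + norm (u s - u t - (s - t) *\<^sub>R (- zeta t))"
      by (metis norm_triangle_ineq4)
    then show ?thesis by simp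
  qed
  also have "\<dots> \<le> (L + e) * (s - t)" using a b by (simp add: algebra_simps)
  finally show "norm (zeta t) \<le> L + e" using s by (simp add: mult.commute)
qed

lemma L1:
  assumes t0: "t > 0" and eta: "\<eta> > 0"
  shows "\<exists>d>0. \<forall>s. t < s \<and> s < t + d \<longrightarrow> (norm (zeta t))^2 - \<eta> \<le> inner (zeta s) (zeta t)"
proof (rule ccontr)
  define Z where "Z = (norm (zeta t))^2"
  assume "\<not> ?thesis"
  then have "\<forall>d>0. \<exists>s. t < s \<and> s < t + d \<and> inner (zeta s) (zeta t) < Z - \<eta>"
    unfolding Z_def by (auto simp: not_le)
  then have "\<forall>m::nat. \<exists>s. t < s \<and> s < t + 1 / Suc m \<and> inner (zeta s) (zeta t) < Z - \<eta>"
    by auto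
  from choice[OF this] obtain sq where sq': "\<forall>m. t < sq m \<and> sq m < t + 1 / Suc m \<and> inner (zeta (sq m)) (zeta t) < Z - \<eta>"
    by blast
  then have sq: "\<And>m. t < sq m" "\<And>m. sq m < t + 1 / Suc m" "\<And>m. inner (zeta (sq m)) (zeta t) < Z - \<eta>"
    by auto
  have t2: "t / 2 > 0" using t0 by simp
  obtain L where L0: "0 \<le> L" and Lip: "\<And>s r. s \<ge> t/2 \<Longrightarrow> r \<ge> t/2 \<Longrightarrow> norm (u s - u r) \<le> L * \<bar>s - r\<bar>"
    using lipI[OF t2] by blast
  have zb: "norm (zeta (sq m)) \<le> L" for m
    using zeta_bound[OF L0 Lip t2] sq(1)[of m] t0 by simp
  have udist: "norm (u (sq m) - u t) \<le> L * (1 / Suc m)" for m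
  proof -
    have "norm (u (sq m) - u t) \<le> L * \<bar>sq m - t\<bar>" using Lip[of "sq m" t] sq(1)[of m] t0 by simp
    also have "\<dots> \<le> L * (1 / Suc m)" using sq(1,2)[of m] L0 by (intro mult_left_mono) auto
    finally show ?thesis .
  qed
  obtain x where x: "\<And>C. closed C \<and> convex C \<and> (\<exists>n. \<forall>m\<ge>n. zeta (sq m) \<in> C) \<Longrightarrow> x \<in> C"
    using hilbert_cluster[of "\<lambda>m. zeta (sq m)" L] zb by blast
  have x1: "inner (zeta t) x \<le> Z - \<eta>"
  proof -
    have "x \<in> {w. inner (zeta t) w \<le> Z - \<eta>}"
    proof (rule x, intro conjI)
      show "\<exists>n. \<forall>m\<ge>n. zeta (sq m) \<in> {w. inner (zeta t) w \<le> Z - \<eta>}"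
        using sq(3) by (auto simp: inner_commute less_imp_le)
    qed (auto simp: closed_halfspace_le convex_halfspace_le)
    then show ?thesis by simp
  qed
  have x2: "x \<in> subdiff J (u t)"
    unfolding subdiff_def
  proof (intro CollectI allI)
    fix v
    show "J (u t) + ereal (inner x (v - u t)) \<le> J v"
    proof (cases "J v")
      case PInf then show ?thesis by simp
    next
      case MInf then show ?thesis using prp unfolding proper_ereal_def by auto
    next
      case (real r)
      have "E t + inner x (v - u t) \<le> r"
      proof (rule field_le_epsilon)
        fix \<epsilon> :: real assume eps: "\<epsilon> > 0"
        obtain d1 where d1: "d1 > 0" "\<And>w. dist w (u t) < d1 \<Longrightarrow> ereal (E t - \<epsilon>/2) < J w"
          using lsc_point[OF lsc JE[OF t0], of "\<epsilon>/2"] eps by auto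
        define K where "K = L * L + L + 1"
        have "0 \<le> L * L" using L0 by simp
        then have K: "K > 0" "L \<le> K" "L * L \<le> K" using L0 unfolding K_def by linarith+
        have "0 < min d1 (\<epsilon>/2) / K" using d1 eps K by simp
        then obtain n where n: "inverse (real (Suc n)) < min d1 (\<epsilon>/2) / K"
          using reals_Archimedean by blast
        have "inner (v - u t) (zeta (sq m)) \<le> r - E t + \<epsilon>" if m: "m \<ge> n" for m
        proof -
          have w: "1 / real (Suc m) \<le> 1 / real (Suc n)" using m by (simp add: frac_le)
          have w0: "0 < 1 / real (Suc m)" by simp
          have kn: "inverse (real (Suc n)) * K < min d1 (\<epsilon>/2)"
            using n by (simp only: pos_less_divide_eq[OF K(1), symmetric])
          have "K * (1 / real (Suc m)) \<le> K * (1 / real (Suc n))" using w K by (intro mult_left_mono) auto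
          moreover have "K * (1 / real (Suc n)) = inverse (real (Suc n)) * K"
            by (simp add: divide_inverse)
          ultimately have Kw: "K * (1 / real (Suc m)) < min d1 (\<epsilon>/2)"
            using kn by linarith
          have "L * (1 / real (Suc m)) \<le> K * (1 / real (Suc m))" using K w0 by (intro mult_right_mono) auto
          then have "norm (u (sq m) - u t) < d1" using udist[of m] Kw by linarith
          then have "ereal (E t - \<epsilon>/2) < J (u (sq m))" using d1(2) by (simp add: dist_norm)
          also have "J (u (sq m)) = ereal (E (sq m))" using JE sq(1)[of m] t0 by simp
          finally have Em: "E t - \<epsilon>/2 < E (sq m)" by simp
          have "J (u (sq m)) + ereal (inner (zeta (sq m)) (v - u (sq m))) \<le> J v"
            using zeta_sub[of "sq m"] sq(1)[of m] t0 unfolding subdiff_def by auto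
          then have sg: "E (sq m) + inner (zeta (sq m)) (v - u (sq m)) \<le> r"
            using JE[of "sq m"] sq(1)[of m] t0 real by simp
          have "\<bar>inner (zeta (sq m)) (u t - u (sq m))\<bar> \<le> norm (zeta (sq m)) * norm (u t - u (sq m))"
            by (rule Cauchy_Schwarz_ineq2)
          also have "\<dots> \<le> L * (L * (1 / Suc m))"
            using zb[of m] udist[of m] L0 by (intro mult_mono) (auto simp: norm_minus_commute)
          also have "\<dots> = (L * L) * (1 / Suc m)" by simp
          also have "\<dots> \<le> K * (1 / Suc m)" using K(3) w0 by (intro mult_right_mono) auto
          finally have "\<bar>inner (zeta (sq m)) (u t - u (sq m))\<bar> < \<epsilon>/2" using Kw by linarith
          moreover have "inner (zeta (sq m)) (v - u (sq m)) = inner (zeta (sq m)) (v - u t) + inner (zeta (sq m)) (u t - u (sq m))"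
            by (simp add: inner_diff_right)
          ultimately show ?thesis using sg Em by (simp add: inner_commute abs_less_iff)
        qed
        then have "x \<in> {w. inner (v - u t) w \<le> r - E t + \<epsilon>}"
          by (intro x) (auto simp: closed_halfspace_le convex_halfspace_le)
        then show "E t + inner x (v - u t) \<le> r + \<epsilon>" by (simp add: inner_commute)
      qed
      then show ?thesis using real JE[OF t0] by simp
    qed
  qed
  have "Z \<le> inner (zeta t) x"
    unfolding Z_def using min_norm_var[OF JE[OF t0] zeta(1)[OF t0] x2] .
  then show False using x1 eta by simp
qed

lemma E_dini:
  assumes t0: "t > 0" and eta: "\<eta> > 0"
  shows "\<exists>d>0. \<forall>s. t < s \<and> s < t + d \<longrightarrow> E s \<le> E t + (s - t) * (\<eta> - (norm (zeta t))^2)"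
proof -
  have t2: "t / 2 > 0" using t0 by simp
  obtain L where L0: "0 \<le> L" and Lip: "\<And>s r. s \<ge> t/2 \<Longrightarrow> r \<ge> t/2 \<Longrightarrow> norm (u s - u r) \<le> L * \<bar>s - r\<bar>"
    using lipI[OF t2] by blast
  obtain d1 where d1: "d1 > 0" "\<And>s. t < s \<and> s < t + d1 \<Longrightarrow> (norm (zeta t))^2 - \<eta>/2 \<le> inner (zeta s) (zeta t)"
    using L1[OF t0, of "\<eta>/2"] eta by auto
  have e2: "\<eta> / (2 * (L + 1)) > 0" using eta L0 by simp
  obtain d2 where d2: "d2 > 0" "\<And>s. t < s \<and> s < t + d2 \<Longrightarrow> norm (u s - u t - (s - t) *\<^sub>R (- zeta t)) \<le> \<eta> / (2 * (L + 1)) * (s - t)"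
    using vd_approx[OF zeta(2)[OF t0] e2] by blast
  show ?thesis
  proof (intro exI[of _ "min d1 d2"] conjI allI impI)
    show "min d1 d2 > 0" using d1 d2 by simp
    fix s assume s: "t < s \<and> s < t + min d1 d2"
    have s0: "s > 0" using s t0 by simp
    have "J (u s) + ereal (inner (zeta s) (u t - u s)) \<le> J (u t)"
      using zeta_sub[OF s0] unfolding subdiff_def by auto
    then have sg: "E s + inner (zeta s) (u t - u s) \<le> E t" using JE[OF s0] JE[OF t0] by simp
    have zs: "norm (zeta s) \<le> L" using zeta_bound[OF L0 Lip t2] s t0 by simp
    have "inner (zeta s) (u s - u t) = inner (zeta s) (u s - u t - (s - t) *\<^sub>R (- zeta t)) - (s - t) * inner (zeta s) (zeta t)"
      by (simp add: inner_diff_right inner_add_right algebra_simps)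
    also have "\<dots> \<le> L * (\<eta> / (2 * (L + 1)) * (s - t)) - (s - t) * ((norm (zeta t))^2 - \<eta>/2)"
    proof (rule diff_mono)
      have "inner (zeta s) (u s - u t - (s - t) *\<^sub>R (- zeta t)) \<le> norm (zeta s) * norm (u s - u t - (s - t) *\<^sub>R (- zeta t))"
        by (rule norm_cauchy_schwarz)
      also have "\<dots> \<le> L * (\<eta> / (2 * (L + 1)) * (s - t))"
        using zs d2(2)[of s] s L0 by (intro mult_mono) auto
      finally show "inner (zeta s) (u s - u t - (s - t) *\<^sub>R (- zeta t)) \<le> L * (\<eta> / (2 * (L + 1)) * (s - t))" .
      show "(s - t) * ((norm (zeta t))^2 - \<eta>/2) \<le> (s - t) * inner (zeta s) (zeta t)"
        using d1(2)[of s] s by (intro mult_left_mono) auto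
    qed
    also have "\<dots> \<le> (s - t) * (\<eta> - (norm (zeta t))^2)"
    proof -
      have "L * (\<eta> / (2 * (L + 1))) \<le> \<eta> / 2" using L0 eta by (simp add: field_simps)
      then have "L * (\<eta> / (2 * (L + 1)) * (s - t)) \<le> (\<eta> / 2) * (s - t)"
        using s by (metis mult.assoc mult_right_mono diff_ge_0_iff_ge less_imp_le)
      moreover have "(\<eta> / 2) * (s - t) - (s - t) * ((norm (zeta t))^2 - \<eta>/2) = (s - t) * (\<eta> - (norm (zeta t))^2)"
        by (simp add: algebra_simps)
      ultimately show ?thesis by linarith
    qed
    finally have "inner (zeta s) (u s - u t) \<le> (s - t) * (\<eta> - (norm (zeta t))^2)" .
    moreover have "inner (zeta s) (u t - u s) = - inner (zeta s) (u s - u t)" by (simp add: inner_diff_right)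
    ultimately show "E s \<le> E t + (s - t) * (\<eta> - (norm (zeta t))^2)" using sg by linarith
  qed
qed

lemma u_isCont: assumes "t > 0" shows "isCont u t"
proof -
  have t2: "t / 2 > 0" using assms by simp
  obtain L where "L-lipschitz_on {t/2..} u" using lip t2 by blast
  then have "continuous_on {t/2..} u" by (rule lipschitz_on_continuous_on)
  moreover have "t \<in> interior {t/2..}" using assms by simp
  ultimately show ?thesis by (rule continuous_on_interior)
qed

lemma E_lsc:
  assumes t0: "t > 0" and eps: "\<epsilon> > 0"
  shows "\<exists>d>0. \<forall>s. \<bar>s - t\<bar> < d \<longrightarrow> E t - \<epsilon> < E s"
proof -
  obtain d1 where d1: "d1 > 0" "\<And>w. dist w (u t) < d1 \<Longrightarrow> ereal (E t - \<epsilon>) < J w"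
    using lsc_point[OF lsc JE[OF t0] eps] by auto
  have "eventually (\<lambda>s. dist (u s) (u t) < d1) (at t)"
    using u_isCont[OF t0] d1(1) unfolding isCont_def by (rule tendstoD)
  then obtain d2 where d2: "d2 > 0" "\<And>s. s \<noteq> t \<Longrightarrow> dist s t < d2 \<Longrightarrow> dist (u s) (u t) < d1"
    unfolding eventually_at by auto
  show ?thesis
  proof (intro exI[of _ "min d2 t"] conjI allI impI)
    show "min d2 t > 0" using d2 t0 by simp
    fix s assume s: "\<bar>s - t\<bar> < min d2 t"
    show "E t - \<epsilon> < E s"
    proof (cases "s = t")
      case True then show ?thesis using eps by simp
    next
      case False
      then have "dist (u s) (u t) < d1" using d2 s by (auto simp: dist_real_def)
      then have "ereal (E t - \<epsilon>) < J (u s)" by (rule d1(2))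
      also have "J (u s) = ereal (E s)" using JE s by auto
      finally show ?thesis by simp
    qed
  qed
qed

definition "y t = inner (u t) (u t)"
definition "P t = y t powr (p/2)"
definition "Phi t = E t / P t"

lemma y_pos: "u t \<noteq> 0 \<Longrightarrow> y t > 0" unfolding y_def by simp

lemma y_deriv:
  assumes t0: "t > 0"
  shows "(y has_real_derivative (- 2 * p * E t)) (at t within {t..})"
proof -
  have d: "(u has_derivative (\<lambda>h. h *\<^sub>R (- zeta t))) (at t within {t..})"
    using zeta(2)[OF t0] by (simp add: has_vector_derivative_def)
  have "((\<lambda>s. inner (u s) (u s)) has_derivative (\<lambda>h. inner (u t) (h *\<^sub>R (- zeta t)) + inner (h *\<^sub>R (- zeta t)) (u t))) (at t within {t..})"
    by (rule has_derivative_inner[OF d d])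
  moreover have "(\<lambda>h. inner (u t) (h *\<^sub>R (- zeta t)) + inner (h *\<^sub>R (- zeta t)) (u t)) = (*) (- 2 * p * E t)"
  proof
    fix h
    have e1: "inner (zeta t) (u t) = p * E t" by (rule euler_flow[OF t0])
    then have e2: "inner (u t) (zeta t) = p * E t" by (simp add: inner_commute)
    show "inner (u t) (h *\<^sub>R (- zeta t)) + inner (h *\<^sub>R (- zeta t)) (u t) = (- 2 * p * E t) * h"
      by (simp only: inner_scaleR_right inner_scaleR_left inner_minus_right inner_minus_left e1 e2) simp
  qed
  ultimately show ?thesis unfolding has_field_derivative_def y_def by simp
qed

lemma P_deriv:
  assumes t0: "t > 0" and ut: "u t \<noteq> 0"
  shows "(P has_real_derivative ((p/2) * y t powr (p/2 - 1) * (- 2 * p * E t))) (at t within {t..})"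
proof -
  have "((\<lambda>z. z powr (p/2)) has_real_derivative (p/2) * y t powr (p/2 - 1)) (at (y t))"
    by (rule has_real_derivative_powr[OF y_pos[OF ut], of "p/2"])
  from DERIV_chain2[OF this y_deriv[OF t0]] show ?thesis unfolding P_def by simp
qed

lemma y_isCont: "t > 0 \<Longrightarrow> isCont y t"
  unfolding y_def using u_isCont by (intro continuous_intros) auto

lemma P_isCont: assumes "t > 0" "u t \<noteq> 0" shows "isCont P t"
proof -
  have "y t \<noteq> 0" using y_pos[OF assms(2)] by simp
  then show ?thesis unfolding P_def using y_isCont[OF assms(1)] by (intro continuous_intros) auto
qed

lemma CS_key:
  assumes t0: "t > 0" and ut: "u t \<noteq> 0"
  shows "- E t * ((p/2) * y t powr (p/2 - 1) * (- 2 * p * E t)) \<le> (norm (zeta t))^2 * P t"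
proof -
  have yp: "y t > 0" using y_pos[OF ut] .
  have "(p * E t)^2 = (inner (zeta t) (u t))^2" using euler_flow[OF t0] by simp
  also have "\<dots> \<le> inner (zeta t) (zeta t) * inner (u t) (u t)" by (rule Cauchy_Schwarz_ineq)
  also have "\<dots> = (norm (zeta t))^2 * y t" by (simp add: y_def power2_norm_eq_inner)
  finally have cs: "(p * E t)^2 \<le> (norm (zeta t))^2 * y t" .
  have "- E t * ((p/2) * y t powr (p/2 - 1) * (- 2 * p * E t)) = (p * E t)^2 * y t powr (p/2 - 1)"
    by (simp add: power2_eq_square algebra_simps)
  also have "\<dots> \<le> (norm (zeta t))^2 * y t * y t powr (p/2 - 1)"
    using cs by (intro mult_right_mono) auto
  also have "\<dots> = (norm (zeta t))^2 * (y t * y t powr (p/2 - 1))" by (simp add: mult.assoc)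
  also have "y t * y t powr (p/2 - 1) = P t"
  proof -
    have "y t powr (p/2) = y t powr (1 + (p/2 - 1))" by simp
    also have "\<dots> = y t powr 1 * y t powr (p/2 - 1)" by (rule powr_add)
    also have "\<dots> = y t * y t powr (p/2 - 1)" using yp by simp
    finally show ?thesis unfolding P_def by simp
  qed
  finally show ?thesis by (simp add: mult.assoc)
qed

lemma P_pos: assumes "u t \<noteq> 0" shows "P t > 0"
proof -
  have "y t > 0" using y_pos[OF assms] .
  then show ?thesis unfolding P_def by simp
qed

lemma Phi_dini:
  assumes t0: "t > 0" and ut: "u t \<noteq> 0" and eta: "\<eta> > 0"
  shows "\<exists>d>0. \<forall>s. t < s \<and> s < t + d \<longrightarrow> Phi s \<le> Phi t + \<eta> * (s - t)"
proof -
  define Et where "Et = E t"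
  define Pt where "Pt = P t"
  define Z where "Z = (norm (zeta t))^2"
  define D where "D = (p/2) * y t powr (p/2 - 1) * (- 2 * p * E t)"
  have Et0: "Et \<ge> 0" unfolding Et_def by (rule E_nonneg)
  have Pt0: "Pt > 0" unfolding Pt_def by (rule P_pos[OF ut])
  define \<eta>1 where "\<eta>1 = \<eta> * Pt / 4"
  define \<eta>2 where "\<eta>2 = \<eta> * Pt^2 / (4 * (Et + 1))"
  have \<eta>1: "\<eta>1 > 0" unfolding \<eta>1_def using eta Pt0 by simp
  have \<eta>2: "\<eta>2 > 0" unfolding \<eta>2_def using eta Pt0 Et0 by simp
  obtain d1 where d1: "d1 > 0" "\<And>s. t < s \<and> s < t + d1 \<Longrightarrow> E s \<le> Et + (s - t) * (\<eta>1 - Z)"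
    using E_dini[OF t0 \<eta>1] unfolding Et_def Z_def by blast
  obtain d2 where d2: "d2 > 0" "\<And>s. t < s \<and> s < t + d2 \<Longrightarrow> \<bar>P s - Pt - (s - t) * D\<bar> \<le> \<eta>2 * (s - t)"
    using real_approx[OF P_deriv[OF t0 ut] \<eta>2] unfolding Pt_def D_def by blast
  have "eventually (\<lambda>s. dist (P s) (P t) < Pt / 2) (at t)"
    using P_isCont[OF t0 ut] Pt0 unfolding isCont_def by (intro tendstoD) auto
  then obtain d3 where d3: "d3 > 0" "\<And>s. s \<noteq> t \<Longrightarrow> dist s t < d3 \<Longrightarrow> dist (P s) (P t) < Pt / 2"
    unfolding eventually_at by auto
  have key: "- Et * D \<le> Z * Pt" unfolding Et_def D_def Z_def Pt_def by (rule CS_key[OF t0 ut])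
  define B where "B = \<eta>1 * Pt + \<eta>2 * Et"
  have B0: "B \<ge> 0" unfolding B_def using \<eta>1 \<eta>2 Et0 Pt0 by simp
  have Bq: "2 * B / Pt^2 \<le> \<eta>"
  proof -
    have q: "Et / (Et + 1) \<le> 1" using Et0 by simp
    have "\<eta>2 * Et = (\<eta> * Pt^2 / 4) * (Et / (Et + 1))" unfolding \<eta>2_def by simp
    also have "\<dots> \<le> (\<eta> * Pt^2 / 4) * 1" using q eta by (intro mult_left_mono) auto
    finally have a: "\<eta>2 * Et \<le> \<eta> * Pt^2 / 4" by simp
    have b: "\<eta>1 * Pt = \<eta> * Pt^2 / 4" unfolding \<eta>1_def by (simp add: power2_eq_square)
    have "\<eta>1 * Pt + \<eta>2 * Et \<le> \<eta> * Pt^2 / 4 + \<eta> * Pt^2 / 4" using a b by simp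
    then have "2 * B \<le> \<eta> * Pt^2" unfolding B_def by simp
    then show ?thesis using Pt0 by (simp add: pos_divide_le_eq)
  qed
  show ?thesis
  proof (intro exI[of _ "min d1 (min d2 d3)"] conjI allI impI)
    show "min d1 (min d2 d3) > 0" using d1 d2 d3 by simp
    fix s assume s: "t < s \<and> s < t + min d1 (min d2 d3)"
    have h0: "s - t \<ge> 0" using s by simp
    have "min d1 (min d2 d3) \<le> d1" "min d1 (min d2 d3) \<le> d2" "min d1 (min d2 d3) \<le> d3" by simp_all
    then have sd: "s < t + d1" "s < t + d2" "s < t + d3" using s by linarith+
    then have Es: "E s \<le> Et + (s - t) * (\<eta>1 - Z)" using d1(2)[of s] s by simp
    have Ps: "P s \<ge> Pt + (s - t) * D - \<eta>2 * (s - t)" using d2(2)[of s] s sd by (simp add: abs_le_iff)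
    have "dist (P s) (P t) < Pt / 2" using d3(2)[of s] s sd by (auto simp: dist_real_def)
    then have "\<bar>P s - Pt\<bar> < Pt / 2" unfolding dist_real_def Pt_def .
    then have Ps2: "P s \<ge> Pt / 2" by linarith
    have a: "E s * Pt \<le> (Et + (s - t) * (\<eta>1 - Z)) * Pt" using Es Pt0 by (intro mult_right_mono) auto
    have b: "Et * (Pt + (s - t) * D - \<eta>2 * (s - t)) \<le> Et * P s" using Ps Et0 by (intro mult_left_mono) auto
    have c: "(s - t) * (- Et * D) \<le> (s - t) * (Z * Pt)" using key h0 by (intro mult_left_mono) auto
    have "E s * Pt - Et * P s \<le> (s - t) * B"
      using a b c unfolding B_def by (simp add: algebra_simps)
    then have "E s / P s - Et / Pt \<le> (s - t) * (2 * B / Pt^2)"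
      by (intro quot_step[OF Pt0 Ps2 _ B0 h0])
    also have "\<dots> \<le> (s - t) * \<eta>" using Bq h0 by (intro mult_left_mono) auto
    finally show "Phi s \<le> Phi t + \<eta> * (s - t)" unfolding Phi_def Et_def Pt_def by (simp add: algebra_simps)
  qed
qed

lemma Phi_lsc:
  assumes t0: "t > 0" and a: "a < t" and nz: "\<And>s. a \<le> s \<Longrightarrow> s \<le> t \<Longrightarrow> u s \<noteq> 0" and eps: "\<epsilon> > 0"
  shows "\<exists>d>0. \<forall>s. t - d < s \<and> s < t \<longrightarrow> Phi t \<le> Phi s + \<epsilon>"
proof -
  have ut: "u t \<noteq> 0" using nz a by simp
  define w where "w s = 1 / P s" for s
  have wc: "isCont w t" unfolding w_def using P_isCont[OF t0 ut] P_pos[OF ut] by (intro continuous_intros) auto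
  define Et where "Et = E t"
  have Et0: "Et \<ge> 0" unfolding Et_def by (rule E_nonneg)
  have wt0: "w t > 0" unfolding w_def using P_pos[OF ut] by simp
  define e2 where "e2 = min 1 (\<epsilon> / (2 * (Et + 1)))"
  define e1 where "e1 = \<epsilon> / (2 * (w t + 2))"
  have e2: "e2 > 0" "e2 \<le> 1" "Et * e2 \<le> \<epsilon> / 2" using eps Et0 unfolding e2_def
    by (auto simp: field_simps min_def)
  have e1: "e1 > 0" "e1 * (w t + e2) \<le> \<epsilon> / 2" using eps wt0 e2 unfolding e1_def by (auto simp: field_simps)
  obtain d1 where d1: "d1 > 0" "\<And>s. \<bar>s - t\<bar> < d1 \<Longrightarrow> Et - e1 < E s"
    using E_lsc[OF t0 e1(1)] unfolding Et_def by blast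
  have "eventually (\<lambda>s. dist (w s) (w t) < e2) (at t)"
    using wc e2(1) unfolding isCont_def by (rule tendstoD)
  then obtain d2 where d2: "d2 > 0" "\<And>s. s \<noteq> t \<Longrightarrow> dist s t < d2 \<Longrightarrow> dist (w s) (w t) < e2"
    unfolding eventually_at by auto
  show ?thesis
  proof (intro exI[of _ "min (t - a) (min d1 d2)"] conjI allI impI)
    show "min (t - a) (min d1 d2) > 0" using a d1 d2 by simp
    fix s assume s: "t - min (t - a) (min d1 d2) < s \<and> s < t"
    have "t - (t - a) \<le> t - min (t - a) (min d1 d2)" by simp
    then have "a \<le> s" "s \<le> t" using s by linarith+
    then have us: "u s \<noteq> 0" by (rule nz)
    have ws: "w s > 0" unfolding w_def using P_pos[OF us] by simp
    have "\<bar>s - t\<bar> < d1" "dist s t < d2" "s \<noteq> t" using s by (auto simp: dist_real_def)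
    then have Es: "E s > Et - e1" and wd: "\<bar>w s - w t\<bar> < e2" using d1(2)[of s] d2(2)[of s] by (auto simp: dist_real_def)
    have "Et * w t \<le> E s * w s + (Et * e2 + e1 * (w t + e2))"
      by (rule lsc_arith[OF Et0 ws Es wd e1(1)])
    then have "Et * w t \<le> E s * w s + \<epsilon>" using e1 e2 by linarith
    then show "Phi t \<le> Phi s + \<epsilon>" unfolding Phi_def w_def Et_def by simp
  qed
qed

lemma Phi_mono:
  assumes d0: "\<delta> > 0" and db: "\<delta> \<le> b" and nz: "\<And>s. \<delta> \<le> s \<Longrightarrow> s \<le> b \<Longrightarrow> u s \<noteq> 0"
  shows "Phi b \<le> Phi \<delta>"
proof (rule dini_mono[OF db])
  fix t \<epsilon> :: real assume h: "\<delta> < t" "t \<le> b" "\<epsilon> > 0"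
  have nz': "u s \<noteq> 0" if "\<delta> \<le> s" "s \<le> t" for s
  proof -
    have "s \<le> b" using that h by linarith
    then show ?thesis using nz that(1) by blast
  qed
  have t0: "t > 0" using h d0 by linarith
  show "\<exists>d>0. \<forall>s. t - d < s \<and> s < t \<longrightarrow> Phi t \<le> Phi s + \<epsilon>"
    by (rule Phi_lsc[OF t0 h(1) nz' h(3)])
next
  fix t \<eta> :: real assume h: "\<delta> \<le> t" "t < b" "\<eta> > 0"
  have t0: "t > 0" using h d0 by linarith
  have ut: "u t \<noteq> 0" using nz h by simp
  show "\<exists>d>0. \<forall>s. t < s \<and> s < t + d \<longrightarrow> Phi s \<le> Phi t + \<eta> * (s - t)"
    by (rule Phi_dini[OF t0 ut h(3)])
qed

end

theorem theorem1:
  fixes J :: "'a::{real_inner, complete_space} \<Rightarrow> ereal"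
    and p :: real and f :: 'a and u :: "real \<Rightarrow> 'a"
  assumes "p \<ge> 2"
    and "convex_ereal J" and "lsc_ereal J" and "proper_ereal J"
    and "closure (eff_dom J) = UNIV"
    and "abs_p_homogeneous p J"
    and "lambda1 p J > 0"
    and "f \<in> H0 J"
    and "is_gradient_flow J f u"
  shows "extinction_time u = \<infinity>"
proof -
  have gf: "continuous_on {0..} u" "\<forall>\<delta>>0. \<exists>L. L-lipschitz_on {\<delta>..} u" "u 0 = f"
    "\<forall>t>0. \<exists>\<zeta>. min_norm_elem (subdiff J (u t)) \<zeta> \<and> (u has_vector_derivative (- \<zeta>)) (at t within {t..})"
    using assms(9) unfolding is_gradient_flow_def by auto
  interpret gflow J p u
    using assms(1,2,3,4,6) gf(2,4) by unfold_locales auto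
  have f0: "f \<noteq> 0" using assms(8) unfolding H0_def by auto
  show ?thesis
  proof (rule ccontr)
    assume ne: "extinction_time u \<noteq> \<infinity>"
    have "{ereal T | T. T > 0 \<and> (\<forall>t\<ge>T. u t = 0)} \<noteq> {}"
    proof
      assume e: "{ereal T | T. T > 0 \<and> (\<forall>t\<ge>T. u t = 0)} = {}"
      have "extinction_time u = Inf {}" unfolding extinction_time_def e by (rule refl)
      then have "extinction_time u = \<infinity>" by (simp add: top_ereal_def)
      then show False using ne by simp
    qed
    then obtain T0 where T0: "T0 > 0" "\<And>t. t \<ge> T0 \<Longrightarrow> u t = 0" by auto
    define Zs where "Zs = {t \<in> {0..T0}. u t = 0}"
    have "continuous_on {0..T0} u" using gf(1) by (rule continuous_on_subset) auto
    then have clZ: "closed Zs" unfolding Zs_def by (intro continuous_closed_preimage_constant) auto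
    have T0Z: "T0 \<in> Zs" unfolding Zs_def using T0 by auto
    have bddZ: "bdd_below Zs" unfolding Zs_def by (auto intro: bdd_belowI[of _ 0])
    define T where "T = Inf Zs"
    have TZ: "T \<in> Zs" unfolding T_def using clZ T0Z bddZ by (intro closed_contains_Inf) auto
    then have uT: "u T = 0" and T0': "0 \<le> T" unfolding Zs_def by auto
    have Tpos: "T > 0" using uT gf(3) f0 T0' by (cases "T = 0") auto
    have nzT: "u s \<noteq> 0" if "0 \<le> s" "s < T" for s
    proof
      assume "u s = 0"
      then have "s \<in> Zs" unfolding Zs_def using that TZ by (auto simp: Zs_def)
      then have "T \<le> s" unfolding T_def using bddZ by (rule cInf_lower)
      then show False using that by simp
    qed
    define \<delta> where "\<delta> = T / 2"
    have d0: "\<delta> > 0" "\<delta> < T" using Tpos by (auto simp: \<delta>_def)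
    define C where "C = Phi \<delta>"
    have Phi_b: "Phi t \<le> C" if "\<delta> \<le> t" "t < T" for t
    proof -
      have "u s \<noteq> 0" if "\<delta> \<le> s" "s \<le> t" for s
      proof (rule nzT)
        show "0 \<le> s" using that d0 by linarith
        show "s < T" using that \<open>t < T\<close> by linarith
      qed
      then show ?thesis unfolding C_def by (rule Phi_mono[OF d0(1) \<open>\<delta> \<le> t\<close>])
    qed
    have y_b: "y t \<le> y \<delta>" if "\<delta> \<le> t" "t \<le> T" for t
    proof (rule dini_mono[OF that(1)])
      fix r \<epsilon> :: real assume h: "\<delta> < r" "r \<le> t" "\<epsilon> > 0"
      have "r > 0" using h d0 by linarith
      show "\<exists>d>0. \<forall>s. r - d < s \<and> s < r \<longrightarrow> y r \<le> y s + \<epsilon>"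
        by (rule cont_lsc[OF y_isCont[OF \<open>r > 0\<close>] h(3)])
    next
      fix r \<eta> :: real assume h: "\<delta> \<le> r" "r < t" "\<eta> > 0"
      have "r > 0" using h d0 by linarith
      have "0 \<le> 2 * p * E r" using E_nonneg[of r] assms(1) by simp
      then have "- 2 * p * E r \<le> 0" by simp
      then show "\<exists>d>0. \<forall>s. r < s \<and> s < r + d \<longrightarrow> y s \<le> y r + \<eta> * (s - r)"
        by (rule real_dini_le[OF y_deriv[OF \<open>r > 0\<close>] _ h(3)])
    qed
    have "u \<delta> \<noteq> 0" using nzT d0 by simp
    then have yd: "y \<delta> > 0" by (rule y_pos)
    define K where "K = 2 * p * C * y \<delta> powr (p/2 - 1)"
    have C0: "C \<ge> 0" unfolding C_def Phi_def P_def using E_nonneg by simp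
    have Kb: "2 * p * E t \<le> K * y t" if t: "\<delta> \<le> t" "t < T" for t
    proof -
      have ut: "u t \<noteq> 0" using t d0 by (intro nzT) linarith+
      have Pt: "P t > 0" by (rule P_pos[OF ut])
      have "E t = Phi t * P t" unfolding Phi_def using Pt by simp
      also have "\<dots> \<le> C * P t" using Phi_b[OF t] Pt by (intro mult_right_mono) auto
      finally have Ea: "E t \<le> C * P t" .
      have yt: "y t > 0" by (rule y_pos[OF ut])
      have "P t = y t powr (1 + (p/2 - 1))" unfolding P_def by simp
      also have "\<dots> = y t powr 1 * y t powr (p/2 - 1)" by (rule powr_add)
      also have "\<dots> = y t powr (p/2 - 1) * y t" using yt by simp
      finally have Pe: "P t = y t powr (p/2 - 1) * y t" .
      have "y t \<le> y \<delta>" using y_b[of t] t by simp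
      then have "y t powr (p/2 - 1) \<le> y \<delta> powr (p/2 - 1)"
        using assms(1) yt by (intro powr_mono2) auto
      then have "y t powr (p/2 - 1) * y t \<le> y \<delta> powr (p/2 - 1) * y t"
        using yt by (intro mult_right_mono) auto
      then have "C * P t \<le> C * (y \<delta> powr (p/2 - 1) * y t)"
        unfolding Pe using C0 by (intro mult_left_mono) auto
      with Ea have "E t \<le> C * (y \<delta> powr (p/2 - 1) * y t)" by linarith
      then have "2 * p * E t \<le> 2 * p * (C * (y \<delta> powr (p/2 - 1) * y t))"
        using assms(1) by (intro mult_left_mono) auto
      then show ?thesis unfolding K_def by (simp add: mult.assoc)
    qed
    define \<psi> where "\<psi> s = - (y s * exp (K * s))" for s
    have "\<psi> T \<le> \<psi> \<delta>"
    proof (rule dini_mono[of \<delta> T \<psi>])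
      show "\<delta> \<le> T" using d0 by simp
    next
      fix r \<epsilon> :: real assume "\<delta> < r" "r \<le> T" "\<epsilon> > 0"
      moreover have "isCont \<psi> r" unfolding \<psi>_def using y_isCont d0 \<open>\<delta> < r\<close>
        by (intro continuous_intros) auto
      ultimately show "\<exists>d>0. \<forall>s. r - d < s \<and> s < r \<longrightarrow> \<psi> r \<le> \<psi> s + \<epsilon>"
        using cont_lsc by blast
    next
      fix r \<eta> :: real assume r: "\<delta> \<le> r" "r < T" "\<eta> > 0"
      have r0: "r > 0" using r d0 by simp
      have ex: "((\<lambda>s. exp (K * s)) has_real_derivative exp (K * r) * K) (at r within {r..})"
        by (auto intro!: derivative_eq_intros)
      have "(\<psi> has_real_derivative - ((- 2 * p * E r) * exp (K * r) + (exp (K * r) * K) * y r)) (at r within {r..})"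
        unfolding \<psi>_def by (rule DERIV_minus[OF DERIV_mult[OF y_deriv[OF r0] ex]])
      moreover have "- ((- 2 * p * E r) * exp (K * r) + (exp (K * r) * K) * y r) \<le> 0"
      proof -
        have "2 * p * E r * exp (K * r) \<le> K * y r * exp (K * r)"
          using Kb[OF r(1,2)] by (intro mult_right_mono) auto
        then show ?thesis by (simp add: algebra_simps)
      qed
      ultimately show "\<exists>d>0. \<forall>s. r < s \<and> s < r + d \<longrightarrow> \<psi> s \<le> \<psi> r + \<eta> * (s - r)"
        using real_dini_le r(3) by blast
    qed
    moreover have "\<psi> T = 0" unfolding \<psi>_def y_def using uT by simp
    moreover have "\<psi> \<delta> < 0" unfolding \<psi>_def using yd by simp
    ultimately show False by simp
  qed
qed

end
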